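(* Let $n\ge2$ and let $E_1,\dots,E_n,H_1,\dots,H_n$ be logically independent events with $H_i\ne\emptyset$ for all $i$. Then the set $\Pi$ of all coherent prevision assessments $(x_1,\dots,x_n,x_{1\cdots n})$ on $\mathcal F=\{E_1|H_1,\dots,E_n|H_n,\mathscr C_{1\cdots n}\}$ is $$\Pi=\{(x_1,\dots,x_n,x_{1\cdots n}):(x_1,\dots,x_n)\in[0,1]^n,\ T_L(x_1,\dots,x_n)\le x_{1\cdots n}\le T_M(x_1,\dots,x_n)\},$$ where $T_L(x_1,\dots,x_n)=\max\{\sum_{i=1}^nx_i-n+1,0\}$ and $T_M(x_1,\dots,x_n)=\min\{x_1,\dots,x_n\}$. In particular the Fréchet–Hoeffding bounds for the prevision of the conjunction are sharp.
   Context: Events are identified with their indicators; $\bar E$ is the negation of $E$ and $EH$ the conjunction. For events $E,H$ with $H\neq\emptyset$, the conditional event $E|H$ is true if $EH$ is true, false if $\bar EH$ is true, void if $\bar H$ is true; once $P(E|H)=x$ is assessed, $E|H$ is identified with the random quantity $EH+x\bar H$. More generally a finite conditional random quantity $X|H$ with assessed prevision $\mu=\mathbb P(X|H)$ is identified with $XH+\mu\bar H$. Coherence (de Finetti): a prevision assessment $(\mu_1,\dots,\mu_m)$ on a family $\{X_1|H_1,\dots,X_m|H_m\}$ is coherent iff for every choice of real stakes $s_1,\dots,s_m$ the random gain $G=\sum_{i}s_iH_i(X_i-\mu_i)$, restricted to the values it can take when $H_1\vee\dots\vee H_m$ is true, satisfies $\min G\le 0\le\max G$ (and the same holds for every subfamily).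 Events $E_1,\dots,E_n,H_1,\dots,H_n$ are logically independent if all $2^{2n}$ conjunctions of these events or their negations are nonempty. Conjunction of $n$ conditional events: for every nonempty $S\subseteq\{1,\dots,n\}$ let $x_S$ be a prevision value assigned to $\mathscr C_S=\bigwedge_{i\in S}(E_i|H_i)$ (defined recursively, $\mathscr C_{\{i\}}=E_i|H_i$, $x_{\{i\}}=x_i$). Then $\mathscr C_{1\cdots n}$ is the random quantity equal to $1$ if $\bigwedge_{i=1}^nE_iH_i$ is true; $0$ if $\bigvee_{i=1}^n\bar E_iH_i$ is true; $x_S$ if $(\bigwedge_{i\in S}\bar H_i)\wedge(\bigwedge_{i\notin S}E_iH_i)$ is true, for each nonempty strict subset $S$; and $x_{1\cdots n}=\mathbb P(\mathscr C_{1\cdots n})$ if $\bigwedge_{i=1}^n\bar H_i$ is true. The values $x_S$ of the strict sub-conjunctions are fixed (coherently assessed) beforehand; the statement concerns the assessment on $\mathcal F$. *)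

theory Defs
  imports Main "HOL-Library.Indicator_Function"
begin

text \<open>A finite family of conditional random quantities is indexed by a finite
  set I; member i is X i | C i with assessed prevision mu i.
  Only the values of X i on C i matter for the random gain.\<close>

definition coherent ::
  "'i set \<Rightarrow> ('i \<Rightarrow> 'w \<Rightarrow> real) \<Rightarrow> ('i \<Rightarrow> 'w set) \<Rightarrow> ('i \<Rightarrow> real) \<Rightarrow> bool" where
  "coherent I X C mu \<longleftrightarrow>
     (\<forall>J \<subseteq> I. J \<noteq> {} \<longrightarrow> (\<forall>s :: 'i \<Rightarrow> real.
        let G = (\<lambda>w. \<Sum>i\<in>J. s i * indicator (C i) w * (X i w - mu i)) in
        (\<exists>w \<in> (\<Union>i\<in>J. C i). G w \<le> 0) \<and> (\<exists>w \<in> (\<Union>i\<in>J. C i). G w \<ge> 0)))"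

definition log_indep :: "nat \<Rightarrow> (nat \<Rightarrow> 'w set) \<Rightarrow> (nat \<Rightarrow> 'w set) \<Rightarrow> bool" where
  "log_indep n E H \<longleftrightarrow>
     (\<forall>A \<subseteq> {1..n}. \<forall>B \<subseteq> {1..n}.
        (\<Inter>i\<in>{1..n}. if i \<in> A then E i else - E i) \<inter>
        (\<Inter>i\<in>{1..n}. if i \<in> B then H i else - H i) \<noteq> {})"

text \<open>The conjunction of the conditional events E_i|H_i, i in S, as a random
  quantity, given prevision values x T for the sub-conjunctions T.\<close>
definition conj_rv :: "(nat \<Rightarrow> 'w set) \<Rightarrow> (nat \<Rightarrow> 'w set) \<Rightarrow> (nat set \<Rightarrow> real) \<Rightarrow> nat set \<Rightarrow> 'w \<Rightarrow> real" where
  "conj_rv E H x S w =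
     (if \<exists>i\<in>S. w \<in> H i \<and> w \<notin> E i then 0
      else if {i\<in>S. w \<notin> H i} = {} then 1
      else x {i\<in>S. w \<notin> H i})"

definition conj_cond :: "(nat \<Rightarrow> 'w set) \<Rightarrow> nat set \<Rightarrow> 'w set" where
  "conj_cond H S = (\<Union>i\<in>S. H i)"

definition T_L :: "nat \<Rightarrow> (nat \<Rightarrow> real) \<Rightarrow> real" where
  "T_L n y = max ((\<Sum>i\<in>{1..n}. y i) - real n + 1) 0"

definition T_M :: "nat \<Rightarrow> (nat \<Rightarrow> real) \<Rightarrow> real" where
  "T_M n y = Min (y ` {1..n})"

end

theory Submission
  imports Defs
begin


lemma comb:
  fixes n :: nat and y t :: "nat \<Rightarrow> real" and z a :: real
  assumes n1: "n \<ge> 1"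
    and y01: "\<And>i. i \<in> {1..n} \<Longrightarrow> 0 \<le> y i \<and> y i \<le> 1"
    and lb: "(\<Sum>i\<in>{1..n}. y i) - real n + 1 \<le> z"
    and z0: "0 \<le> z"
    and ub: "\<And>i. i \<in> {1..n} \<Longrightarrow> z \<le> y i"
  shows "\<exists>A\<subseteq>{1..n}. 0 \<le> a * ((if A = {1..n} then 1 else 0) - z)
            + (\<Sum>i\<in>{1..n}. t i * ((if i \<in> A then 1 else 0) - y i))"
proof (rule ccontr)
  define g where "g A = a * ((if A = {1..n} then 1 else 0) - z)
            + (\<Sum>i\<in>{1..n}. t i * ((if i \<in> A then 1 else 0) - y i))" for A
  assume nt: "\<not> ?thesis"
  have neg: "g A < 0" if A: "A \<subseteq> {1..n}" for A
  proof -
    have "\<not> 0 \<le> g A" using nt A unfolding g_def by blast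
    thus ?thesis by simp
  qed
  have z1: "z \<le> 1" using ub[of 1] y01[of 1] n1 by auto
  have g1: "g {1..n} = a * (1 - z) + (\<Sum>i\<in>{1..n}. t i * (1 - y i))"
    unfolding g_def by (intro arg_cong2[where f="(+)"] refl sum.cong) auto
  show False
  proof (cases "\<exists>j\<in>{1..n}. t j < 0")
    case True
    define P where "P = {i\<in>{1..n}. t i \<ge> 0}"
    have PN: "P \<noteq> {1..n}"
    proof -
      from True obtain j where j: "j \<in> {1..n}" "t j < 0" by blast
      hence "j \<notin> P" unfolding P_def by simp
      thus ?thesis using j(1) by blast
    qed
    have gP: "g P = a * (0 - z) + (\<Sum>i\<in>{1..n}. t i * ((if i \<in> P then 1 else 0) - y i))"
      unfolding g_def using PN by simp
    have "z * g {1..n} + (1 - z) * g P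
        = (\<Sum>i\<in>{1..n}. z * (t i * (1 - y i)) + (1 - z) * (t i * ((if i \<in> P then 1 else 0) - y i)))"
      unfolding g1 gP sum.distrib sum_distrib_left[symmetric] by (simp add: algebra_simps)
    also have "\<dots> \<ge> 0"
    proof (rule sum_nonneg)
      fix i assume i: "i \<in> {1..n}"
      show "0 \<le> z * (t i * (1 - y i)) + (1 - z) * (t i * ((if i \<in> P then 1 else 0) - y i))"
      proof (cases "i \<in> P")
        case True
        hence "t i \<ge> 0" unfolding P_def by auto
        moreover have "1 - y i \<ge> 0" using y01[OF i] by auto
        ultimately have "t i * (1 - y i) \<ge> 0" by simp
        thus ?thesis using True by (simp add: algebra_simps)
      next
        case False
        hence "t i < 0" using i unfolding P_def by auto
        moreover have "z - y i \<le> 0" using ub[OF i] by auto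
        ultimately have "t i * (z - y i) \<ge> 0" by (simp add: mult_nonpos_nonpos)
        thus ?thesis using False by (simp add: algebra_simps)
      qed
    qed
    finally have c: "0 \<le> z * g {1..n} + (1 - z) * g P" .
    have a1: "g {1..n} < 0" by (rule neg) auto
    have a2: "g P < 0" by (rule neg) (auto simp: P_def)
    have "z * g {1..n} + (1 - z) * g P < 0"
    proof (cases "z = 0")
      case True thus ?thesis using a2 by simp
    next
      case False
      hence "z * g {1..n} < 0" using z0 a1 by (simp add: mult_pos_neg)
      moreover have "(1 - z) * g P \<le> 0" using z1 a2 by (simp add: mult_nonneg_nonpos)
      ultimately show ?thesis by linarith
    qed
    thus False using c by linarith
  next
    case False
    hence tpos: "\<And>i. i \<in> {1..n} \<Longrightarrow> t i \<ge> 0" by force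
    define D where "D = (\<Sum>j\<in>{1..n}. 1 - y j)"
    define S where "S = (\<Sum>i\<in>{1..n}. t i * (1 - y i))"
    have D_eq: "D = real n - (\<Sum>i\<in>{1..n}. y i)" unfolding D_def by (simp add: sum_subtractf)
    have S0: "S \<ge> 0" unfolding S_def using tpos y01 by (intro sum_nonneg) auto
    have D0: "D \<ge> 0" unfolding D_def using y01 by (intro sum_nonneg) auto
    show False
    proof (cases "D = 0")
      case True
      have "\<forall>j\<in>{1..n}. 1 - y j = 0"
        using True unfolding D_def using y01 by (subst sum_nonneg_eq_0_iff[symmetric]) auto
      hence yj: "\<And>j. j \<in> {1..n} \<Longrightarrow> y j = 1" by auto
      hence "S = 0" unfolding S_def by simp
      moreover have "z = 1" using z1 lb True D_eq by linarith
      moreover have "g {1..n} < 0" by (rule neg) auto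
      ultimately show False using g1 S_def by simp
    next
      case False
      hence Dp: "D > 0" using D0 by linarith
      define K where "K = - a * z + S"
      have hj: "g ({1..n} - {j}) = K - t j" if j: "j \<in> {1..n}" for j
      proof -
        have ne: "{1..n} - {j} \<noteq> {1..n}" using j by (metis Diff_iff insertI1)
        have "(\<Sum>i\<in>{1..n}. t i * ((if i \<in> {1..n} - {j} then 1 else 0) - y i))
            = (\<Sum>i\<in>{1..n}. t i * (1 - y i) - (if i = j then t i else 0))"
          by (intro sum.cong) (auto simp: algebra_simps)
        also have "\<dots> = S - t j" using j by (simp add: sum_subtractf S_def)
        finally show ?thesis unfolding g_def K_def using ne by simp
      qed
      define M where "M = Max ((\<lambda>j. g ({1..n} - {j})) ` {1..n})"
      define m where "m = max (g {1..n}) M"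
      have "M \<in> (\<lambda>j. g ({1..n} - {j})) ` {1..n}" unfolding M_def using n1
        by (intro Max_in) auto
      then obtain j0 where "j0 \<in> {1..n}" "M = g ({1..n} - {j0})" by auto
      hence M0: "M < 0" using neg[of "{1..n} - {j0}"] by auto
      have m0: "m < 0" unfolding m_def using M0 neg[of "{1..n}"] by auto
      have hm: "g ({1..n} - {j}) \<le> m" if "j \<in> {1..n}" for j
        unfolding m_def M_def using that by (intro max.coboundedI2 Max_ge) auto
      have g1m: "g {1..n} \<le> m" unfolding m_def by simp
      have "(\<Sum>j\<in>{1..n}. (1 - z) * (1 - y j) * g ({1..n} - {j})) + D * z * g {1..n}
          = (\<Sum>j\<in>{1..n}. (1 - z) * K * (1 - y j) - (1 - z) * (t j * (1 - y j))) + D * z * g {1..n}"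
      proof (intro arg_cong2[where f="(+)"] refl sum.cong)
        fix j assume j: "j \<in> {1..n}"
        show "(1 - z) * (1 - y j) * g ({1..n} - {j}) = (1 - z) * K * (1 - y j) - (1 - z) * (t j * (1 - y j))"
          unfolding hj[OF j] by (simp add: algebra_simps)
      qed
      also have "\<dots> = (1 - z) * K * D - (1 - z) * S + D * z * (a * (1 - z) + S)"
        unfolding sum_subtractf sum_distrib_left[symmetric] D_def S_def g1 by simp
      also have "\<dots> = S * (D - 1 + z)" unfolding K_def by (simp add: algebra_simps)
      also have "\<dots> \<ge> 0" using S0 D_eq lb by simp
      finally have ge: "0 \<le> (\<Sum>j\<in>{1..n}. (1 - z) * (1 - y j) * g ({1..n} - {j})) + D * z * g {1..n}" .
      have "(\<Sum>j\<in>{1..n}. (1 - z) * (1 - y j) * g ({1..n} - {j})) \<le> (\<Sum>j\<in>{1..n}. (1 - z) * (1 - y j) * m)"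
      proof (rule sum_mono)
        fix j assume j: "j \<in> {1..n}"
        have "(1 - z) * (1 - y j) \<ge> 0" using z1 y01[OF j] by simp
        thus "(1 - z) * (1 - y j) * g ({1..n} - {j}) \<le> (1 - z) * (1 - y j) * m"
          using hm[OF j] by (simp add: mult_left_mono)
      qed
      also have "\<dots> = (1 - z) * D * m" unfolding D_def sum_distrib_right sum_distrib_left by (simp add: algebra_simps)
      finally have s1: "(\<Sum>j\<in>{1..n}. (1 - z) * (1 - y j) * g ({1..n} - {j})) \<le> (1 - z) * D * m" .
      have s2: "D * z * g {1..n} \<le> D * z * m" using g1m Dp z0 by (simp add: mult_left_mono)
      have "(1 - z) * D * m + D * z * m = D * m" by (simp add: algebra_simps)
      moreover have "D * m < 0" using Dp m0 by (simp add: mult_pos_neg)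
      ultimately show False using ge s1 s2 by linarith
    qed
  qed
qed



definition Bnd :: "(nat set \<Rightarrow> real) \<Rightarrow> nat set \<Rightarrow> bool" where
  "Bnd x T \<longleftrightarrow> 0 \<le> x T \<and> (\<Sum>i\<in>T. x {i}) - real (card T) + 1 \<le> x T \<and> (\<forall>i\<in>T. x T \<le> x {i})"

definition cohJ where
  "cohJ X C mu J \<longleftrightarrow> (\<forall>s. (\<exists>w\<in>(\<Union>i\<in>J. C i). (\<Sum>i\<in>J. s i * indicator (C i) w * (X i w - mu i)) \<le> 0)
      \<and> (\<exists>w\<in>(\<Union>i\<in>J. C i). (\<Sum>i\<in>J. s i * indicator (C i) w * (X i w - mu i)) \<ge> 0))"

lemma coherent_iff: "coherent I X C mu \<longleftrightarrow> (\<forall>J\<subseteq>I. J \<noteq> {} \<longrightarrow> cohJ X C mu J)"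
  by (simp add: coherent_def cohJ_def Let_def)

lemma conj_cond_single[simp]: "conj_cond H {i} = H i" by (simp add: conj_cond_def)

lemma conj_rv_single: "w \<in> H i \<Longrightarrow> conj_rv E H x {i} w = (if w \<in> E i then 1 else 0)"
  by (simp add: conj_rv_def)

lemma V_facts:
  fixes E H :: "nat \<Rightarrow> 'w set" and x :: "nat set \<Rightarrow> real"
  assumes fin: "finite S" and w: "w \<in> conj_cond H S"
    and bnd: "\<And>T. T \<noteq> {} \<Longrightarrow> T \<subset> S \<Longrightarrow> Bnd x T"
    and sing: "\<And>i. i\<in>S \<Longrightarrow> 0 \<le> x {i} \<and> x {i} \<le> 1"
  shows "0 \<le> conj_rv E H x S w" "conj_rv E H x S w \<le> 1"
    "\<And>i. i\<in>S \<Longrightarrow> w\<in>H i \<Longrightarrow> w\<notin>E i \<Longrightarrow> conj_rv E H x S w = 0"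
    "\<And>i. i\<in>S \<Longrightarrow> w\<notin>H i \<Longrightarrow> conj_rv E H x S w \<le> x {i}"
    "(\<Sum>i\<in>S. if w\<in>H i then (if w\<in>E i then 1 else 0) else x {i}) - real (card S) + 1 \<le> conj_rv E H x S w"
proof -
  define T where "T = {i\<in>S. w \<notin> H i}"
  have TS: "T \<subset> S" using w unfolding T_def conj_cond_def by auto
  have bT: "T \<noteq> {} \<Longrightarrow> Bnd x T" using bnd TS by auto
  have V: "conj_rv E H x S w = (if \<exists>i\<in>S. w \<in> H i \<and> w \<notin> E i then 0 else if T = {} then 1 else x T)"
    unfolding conj_rv_def T_def by simp
  show "0 \<le> conj_rv E H x S w" using V bT unfolding Bnd_def by auto
  show "conj_rv E H x S w \<le> 1"
  proof -
    have "x T \<le> 1" if ne: "T \<noteq> {}"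
    proof -
      obtain i where i: "i \<in> T" using ne by auto
      hence "x T \<le> x {i}" using bT[OF ne] unfolding Bnd_def by auto
      thus ?thesis using sing[of i] i TS by auto
    qed
    thus ?thesis using V by auto
  qed
  show "\<And>i. i\<in>S \<Longrightarrow> w\<in>H i \<Longrightarrow> w\<notin>E i \<Longrightarrow> conj_rv E H x S w = 0" using V by auto
  show "conj_rv E H x S w \<le> x {i}" if i: "i\<in>S" "w\<notin>H i" for i
  proof -
    have iT: "i \<in> T" using i unfolding T_def by auto
    hence "x T \<le> x {i}" using bT unfolding Bnd_def by auto
    thus ?thesis using V sing[OF i(1)] iT by auto
  qed
  define u where "u i = (if w\<in>H i then (if w\<in>E i then 1 else 0) else x {i})" for i
  have u1: "u i \<le> 1" if "i \<in> S" for i using sing[OF that] unfolding u_def by auto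
  have key: "(\<Sum>i\<in>S. u i) - real (card S) + 1 \<le> conj_rv E H x S w"
  proof (cases "\<exists>i\<in>S. w \<in> H i \<and> w \<notin> E i")
    case True
    then obtain i where i: "i \<in> S" "w \<in> H i" "w \<notin> E i" by auto
    have "(\<Sum>i\<in>S. u i) = u i + (\<Sum>j\<in>S-{i}. u j)" using fin i by (simp add: sum.remove)
    also have "(\<Sum>j\<in>S-{i}. u j) \<le> real (card (S - {i})) * 1"
      by (rule sum_bounded_above) (use u1 in auto)
    finally have "(\<Sum>i\<in>S. u i) \<le> u i + real (card S - 1)" using fin i by simp
    moreover have "u i = 0" using i unfolding u_def by simp
    moreover have "card S \<ge> 1" using fin i by (metis card_0_eq empty_iff less_one not_le)
    ultimately show ?thesis using V True by (simp add: of_nat_diff)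
  next
    case False
    hence uS: "u i = 1" if "i \<in> S - T" for i using that unfolding u_def T_def by auto
    have uT: "u i = x {i}" if "i \<in> T" for i using that unfolding u_def T_def by auto
    have "(\<Sum>i\<in>S. u i) = (\<Sum>i\<in>T. u i) + (\<Sum>i\<in>S-T. u i)"
      using fin TS by (metis sum.subset_diff order_less_imp_le add.commute)
    also have "\<dots> = (\<Sum>i\<in>T. x {i}) + real (card (S - T))" using uS uT by simp
    also have "real (card (S - T)) = real (card S) - real (card T)"
    proof -
      have "finite T" "T \<subseteq> S" using fin TS finite_subset by auto
      hence "card (S - T) = card S - card T" "card T \<le> card S" using fin by (auto simp: card_Diff_subset card_mono)
      thus ?thesis by (simp add: of_nat_diff)
    qed
    finally have su: "(\<Sum>i\<in>S. u i) = (\<Sum>i\<in>T. x {i}) + real (card S) - real (card T)" by simp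
    show ?thesis
    proof (cases "T = {}")
      case True
      thus ?thesis using su V False by simp
    next
      case nT: False
      thus ?thesis using su V False bT[OF nT] unfolding Bnd_def by simp
    qed
  qed
  thus "(\<Sum>i\<in>S. if w\<in>H i then (if w\<in>E i then 1 else 0) else x {i}) - real (card S) + 1 \<le> conj_rv E H x S w"
    by (simp add: u_def)
qed

lemma step:
  fixes E H :: "nat \<Rightarrow> 'w set" and x :: "nat set \<Rightarrow> real"
  assumes fin: "finite S" and c2S: "card S \<ge> 2"
    and bnd: "\<And>T. T \<noteq> {} \<Longrightarrow> T \<subset> S \<Longrightarrow> Bnd x T"
    and sing: "\<And>i. i\<in>S \<Longrightarrow> 0 \<le> x {i} \<and> x {i} \<le> 1"
    and c1: "cohJ (conj_rv E H x) (conj_cond H) x {S}"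
    and c2: "\<And>i. i\<in>S \<Longrightarrow> cohJ (conj_rv E H x) (conj_cond H) x {S, {i}}"
    and c3: "cohJ (conj_rv E H x) (conj_cond H) x (insert S ((\<lambda>i. {i}) ` S))"
  shows "Bnd x S"
proof -
  have notsing: "S \<noteq> {i}" for i using c2S by auto
  have x0: "0 \<le> x S"
  proof -
    obtain w where w: "w \<in> conj_cond H S" and "indicator (conj_cond H S) w * (conj_rv E H x S w - x S) \<le> 0"
      using conjunct1[OF c1[unfolded cohJ_def, rule_format, of "\<lambda>_. 1"]] by auto
    hence "conj_rv E H x S w \<le> x S" by simp
    thus ?thesis using V_facts(1)[where E=E and H=H, OF fin w bnd sing] by linarith
  qed
  have xle: "x S \<le> x {i}" if i: "i \<in> S" for i
  proof (rule ccontr)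
    assume gt: "\<not> ?thesis"
    define s :: "nat set \<Rightarrow> real" where "s T = (if T = S then -1 else 1)" for T
    obtain w where w: "w \<in> conj_cond H S \<union> H i"
      and G: "(\<Sum>T\<in>{S, {i}}. s T * indicator (conj_cond H T) w * (conj_rv E H x T w - x T)) \<le> 0"
      using conjunct1[OF c2[OF i, unfolded cohJ_def, rule_format, of s]] by auto
    have HiS: "H i \<subseteq> conj_cond H S" using i by (auto simp: conj_cond_def)
    hence wS: "w \<in> conj_cond H S" using w by auto
    have Geq: "(\<Sum>T\<in>{S, {i}}. s T * indicator (conj_cond H T) w * (conj_rv E H x T w - x T))
       = - (conj_rv E H x S w - x S) + indicator (H i) w * (conj_rv E H x {i} w - x {i})"
      using notsing[of i] wS by (simp add: s_def)
    show False
    proof (cases "w \<in> H i")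
      case True
      show False
      proof (cases "w \<in> E i")
        case True
        thus False using G Geq \<open>w \<in> H i\<close> conj_rv_single[of w H i E x] V_facts(2)[where E=E and H=H, OF fin wS bnd sing] gt by simp
      next
        case False
        thus False using G Geq \<open>w \<in> H i\<close> conj_rv_single[of w H i E x] V_facts(3)[where E=E and H=H, OF fin wS bnd sing i \<open>w \<in> H i\<close> False] gt by simp
      qed
    next
      case False
      thus False using G Geq V_facts(4)[where E=E and H=H, OF fin wS bnd sing i False] gt by simp
    qed
  qed
  have lb: "(\<Sum>i\<in>S. x {i}) - real (card S) + 1 \<le> x S"
  proof (rule ccontr)
    assume gt: "\<not> ?thesis"
    define s :: "nat set \<Rightarrow> real" where "s T = (if T = S then 1 else -1)" for T
    define J where "J = insert S ((\<lambda>i. {i}) ` S)"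
    have UJ: "(\<Union>T\<in>J. conj_cond H T) = conj_cond H S" unfolding J_def by (auto simp: conj_cond_def)
    obtain w where w: "w \<in> conj_cond H S"
      and G: "(\<Sum>T\<in>J. s T * indicator (conj_cond H T) w * (conj_rv E H x T w - x T)) \<le> 0"
      using conjunct1[OF c3[unfolded cohJ_def J_def[symmetric], rule_format, of s]] UJ by auto
    have Snot: "S \<notin> (\<lambda>i. {i}) ` S" using notsing by auto
    have inj: "inj_on (\<lambda>i. {i}) S" by (auto simp: inj_on_def)
    have tm: "s {i} * indicator (conj_cond H {i}) w * (conj_rv E H x {i} w - x {i})
        = - ((if w\<in>H i then (if w\<in>E i then 1 else 0) else x {i}) - x {i})" if "i \<in> S" for i
      using notsing[of i] by (cases "w \<in> H i") (auto simp: s_def conj_rv_single)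
    have "(\<Sum>T\<in>J. s T * indicator (conj_cond H T) w * (conj_rv E H x T w - x T))
        = (conj_rv E H x S w - x S) + (\<Sum>i\<in>S. s {i} * indicator (conj_cond H {i}) w * (conj_rv E H x {i} w - x {i}))"
      unfolding J_def using fin Snot w by (simp add: sum.reindex[OF inj] s_def)
    also have "(\<Sum>i\<in>S. s {i} * indicator (conj_cond H {i}) w * (conj_rv E H x {i} w - x {i}))
        = - (\<Sum>i\<in>S. (if w\<in>H i then (if w\<in>E i then 1 else 0) else x {i})) + (\<Sum>i\<in>S. x {i})"
      using tm by (simp add: sum_subtractf sum_negf)
    finally show False using G V_facts(5)[where E=E and H=H, OF fin w bnd sing] gt by linarith
  qed
  show ?thesis unfolding Bnd_def using x0 xle lb by auto
qed


lemma pos_part: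
  fixes E H :: "nat \<Rightarrow> 'w set" and x :: "nat set \<Rightarrow> real" and s :: "nat set \<Rightarrow> real"
  assumes n2: "n \<ge> 2" and li: "log_indep n E H"
    and JF: "J \<subseteq> {{i} | i. i \<in> {1..n}} \<union> {{1..n}}" and nJ: "{1..n} \<in> J"
    and sing: "\<And>i. i \<in> {1..n} \<Longrightarrow> 0 \<le> x {i} \<and> x {i} \<le> 1" and B: "Bnd x {1..n}"
  shows "\<exists>w\<in>(\<Union>T\<in>J. conj_cond H T). 0 \<le> (\<Sum>T\<in>J. s T * indicator (conj_cond H T) w * (conj_rv E H x T w - x T))"
proof -
  define t where "t i = (if {i} \<in> J then s {i} else 0)" for i
  have Bn: "(\<Sum>i\<in>{1..n}. x {i}) - real n + 1 \<le> x {1..n}" "0 \<le> x {1..n}"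
     "\<And>i. i \<in> {1..n} \<Longrightarrow> x {1..n} \<le> x {i}" using B unfolding Bnd_def by auto
  have n1: "1 \<le> n" using n2 by simp
  note cb = comb[of n "\<lambda>i. x {i}" "x {1..n}" "s {1..n}" t, OF n1 sing Bn(1) Bn(2) Bn(3)]
  then obtain A where A: "A \<subseteq> {1..n}" and gA: "0 \<le> s {1..n} * ((if A = {1..n} then 1 else 0) - x {1..n})
            + (\<Sum>i\<in>{1..n}. t i * ((if i \<in> A then 1 else 0) - x {i}))" by blast
  have "(\<Inter>i\<in>{1..n}. if i \<in> A then E i else - E i) \<inter> (\<Inter>i\<in>{1..n}. if i \<in> {1..n} then H i else - H i) \<noteq> {}"
    using li[unfolded log_indep_def, rule_format, OF A order_refl] .
  then obtain w where w: "w \<in> (\<Inter>i\<in>{1..n}. if i \<in> A then E i else - E i) \<inter> (\<Inter>i\<in>{1..n}. if i \<in> {1..n} then H i else - H i)"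
    by (meson equals0I)
  have wH: "w \<in> H i" if "i \<in> {1..n}" for i using w that by auto
  have wE: "w \<in> E i \<longleftrightarrow> i \<in> A" if "i \<in> {1..n}" for i using w that by (cases "i \<in> A") auto
  have wC: "w \<in> conj_cond H {1..n}" using wH[of 1] n2 unfolding conj_cond_def by auto
  define K where "K = {i\<in>{1..n}. {i} \<in> J}"
  have Jeq: "J = insert {1..n} ((\<lambda>i. {i}) ` K)"
  proof (rule equalityI)
    show "J \<subseteq> insert {1..n} ((\<lambda>i. {i}) ` K)"
    proof
      fix S assume S: "S \<in> J"
      show "S \<in> insert {1..n} ((\<lambda>i. {i}) ` K)"
      proof (cases "S = {1..n}")
        case False
        with S JF obtain i where "i \<in> {1..n}" "S = {i}" by blast
        thus ?thesis using S unfolding K_def by blast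
      qed simp
    qed
    show "insert {1..n} ((\<lambda>i. {i}) ` K) \<subseteq> J" using nJ unfolding K_def by blast
  qed
  have notsing: "{1..n} \<noteq> {i}" for i :: nat
  proof
    assume h: "{1..n} = {i}"
    have "1 \<in> {1..n}" "2 \<in> {1..n}" using n2 by auto
    thus False using h by auto
  qed
  have notin: "{1..n} \<notin> (\<lambda>i. {i}) ` K" using notsing by blast
  have finK: "finite K" unfolding K_def by auto
  have inj: "inj_on (\<lambda>i. {i}) K" by (auto simp: inj_on_def)
  have V: "conj_rv E H x {1..n} w = (if A = {1..n} then 1 else 0)"
  proof -
    have "{i\<in>{1..n}. w \<notin> H i} = {}" using wH by auto
    moreover have "(\<exists>i\<in>{1..n}. w \<in> H i \<and> w \<notin> E i) \<longleftrightarrow> A \<noteq> {1..n}" using wH wE A by auto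
    ultimately show ?thesis unfolding conj_rv_def by auto
  qed
  have single: "s {i} * indicator (conj_cond H {i}) w * (conj_rv E H x {i} w - x {i})
       = s {i} * ((if i \<in> A then 1 else 0) - x {i})" if "i \<in> K" for i
    using that wH wE conj_rv_single[of w H i E x] unfolding K_def by auto
  have "(\<Sum>T\<in>J. s T * indicator (conj_cond H T) w * (conj_rv E H x T w - x T))
     = s {1..n} * ((if A = {1..n} then 1 else 0) - x {1..n})
       + (\<Sum>i\<in>K. s {i} * indicator (conj_cond H {i}) w * (conj_rv E H x {i} w - x {i}))"
    unfolding Jeq using notin finK wC V by (simp add: sum.reindex[OF inj])
  also have "(\<Sum>i\<in>K. s {i} * indicator (conj_cond H {i}) w * (conj_rv E H x {i} w - x {i}))
      = (\<Sum>i\<in>K. s {i} * ((if i \<in> A then 1 else 0) - x {i}))" using single by (rule sum.cong[OF refl])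
  also have "\<dots> = (\<Sum>i\<in>{1..n}. if {i} \<in> J then s {i} * ((if i \<in> A then 1 else 0) - x {i}) else 0)"
    unfolding K_def by (rule sum.inter_filter) simp
  also have "\<dots> = (\<Sum>i\<in>{1..n}. t i * ((if i \<in> A then 1 else 0) - x {i}))"
    by (rule sum.cong) (auto simp: t_def)
  finally have "0 \<le> (\<Sum>T\<in>J. s T * indicator (conj_cond H T) w * (conj_rv E H x T w - x T))" using gA by simp
  moreover have "w \<in> (\<Union>T\<in>J. conj_cond H T)" using wC nJ by auto
  ultimately show ?thesis by blast
qed

theorem theorem10:
  fixes n :: nat and E H :: "nat \<Rightarrow> 'w set" and x :: "nat set \<Rightarrow> real"
  assumes "n \<ge> 2"
    and "log_indep n E H"
    and "\<forall>i\<in>{1..n}. H i \<noteq> {}"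
    and "coherent {S. S \<noteq> {} \<and> S \<subset> {1..n}} (conj_rv E H x) (conj_cond H) x"
  shows "coherent ({{i} | i. i \<in> {1..n}} \<union> {{1..n}}) (conj_rv E H x) (conj_cond H) x
     \<longleftrightarrow> (\<forall>i\<in>{1..n}. 0 \<le> x {i} \<and> x {i} \<le> 1)
         \<and> T_L n (\<lambda>i. x {i}) \<le> x {1..n} \<and> x {1..n} \<le> T_M n (\<lambda>i. x {i})"
proof -
  have n2: "n \<ge> 2" using assms(1) .
  have hyp: "\<And>J. J \<subseteq> {S. S \<noteq> {} \<and> S \<subset> {1..n}} \<Longrightarrow> J \<noteq> {} \<Longrightarrow> cohJ (conj_rv E H x) (conj_cond H) x J"
    using assms(4) unfolding coherent_iff by blast
  have notsing: "{1..n} \<noteq> {i}" for i :: nat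
  proof
    assume h: "{1..n} = {i}"
    have "1 \<in> {1..n}" "2 \<in> {1..n}" using n2 by auto
    thus False using h by auto
  qed
  have isub: "{i} \<subset> {1..n}" if "i \<in> {1..n}" for i using that notsing[of i] by blast
  have sing: "0 \<le> x {i} \<and> x {i} \<le> 1" if i: "i \<in> {1..n}" for i
  proof -
    have "cohJ (conj_rv E H x) (conj_cond H) x {{i}}"
      using isub[OF i] by (intro hyp) auto
    from this[unfolded cohJ_def, rule_format, of "\<lambda>_. 1"]
    obtain w1 w2 where "w1 \<in> H i" "conj_rv E H x {i} w1 - x {i} \<le> 0"
      "w2 \<in> H i" "conj_rv E H x {i} w2 - x {i} \<ge> 0" by auto
    thus ?thesis using conj_rv_single[of w1 H i E x] conj_rv_single[of w2 H i E x]
      by (auto split: if_splits)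
  qed
  have bndall: "\<forall>T. card T = k \<longrightarrow> T \<noteq> {} \<longrightarrow> T \<subset> {1..n} \<longrightarrow> Bnd x T" for k
  proof (induction k rule: less_induct)
    case (less k)
    show ?case
    proof (intro allI impI)
      fix T :: "nat set" assume ck: "card T = k" and ne: "T \<noteq> {}" and sub: "T \<subset> {1..n}"
      have finT: "finite T" using sub finite_subset by auto
      have Tn: "\<And>i. i \<in> T \<Longrightarrow> i \<in> {1..n}" using sub by auto
      show "Bnd x T"
      proof (cases "card T = 1")
        case True
        then obtain i where Ti: "T = {i}" by (auto simp: card_Suc_eq)
        thus ?thesis using sing[of i] Tn[of i] unfolding Bnd_def by simp
      next
        case False
        have "card T \<noteq> 0" using finT ne by simp
        hence c2: "card T \<ge> 2" using False by linarith
        have bT: "Bnd x T'" if "T' \<noteq> {}" "T' \<subset> T" for T'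
          using less.IH[of "card T'"] that ck psubset_card_mono[OF finT] sub by auto
        have Ts: "T \<noteq> {i}" for i using c2 by auto
        show ?thesis
        proof (rule step[OF finT c2 bT sing])
          show "cohJ (conj_rv E H x) (conj_cond H) x {T}" using ne sub by (intro hyp) auto
          show "cohJ (conj_rv E H x) (conj_cond H) x {T, {i}}" if "i \<in> T" for i
            using ne sub that isub Tn by (intro hyp) auto
          have img: "(\<lambda>i. {i}) ` T \<subseteq> {S. S \<noteq> {} \<and> S \<subset> {1..n}}" using isub Tn by blast
          show "cohJ (conj_rv E H x) (conj_cond H) x (insert T ((\<lambda>i. {i}) ` T))"
          proof (rule hyp)
            show "insert T ((\<lambda>i. {i}) ` T) \<subseteq> {S. S \<noteq> {} \<and> S \<subset> {1..n}}"
              using ne sub img by (simp add: insert_subset)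
          qed simp
        qed (use Tn in auto)
      qed
    qed
  qed
  have bndH: "\<And>T. T \<noteq> {} \<Longrightarrow> T \<subset> {1..n} \<Longrightarrow> Bnd x T" using bndall by blast
  have finn: "finite {1..n}" by simp
  have cn: "card {1..n} \<ge> 2" using n2 by simp
  have nen: "{1..n} \<noteq> {}" using n2 by simp
  have eqv: "((\<forall>i\<in>{1..n}. 0 \<le> x {i} \<and> x {i} \<le> 1)
         \<and> T_L n (\<lambda>i. x {i}) \<le> x {1..n} \<and> x {1..n} \<le> T_M n (\<lambda>i. x {i})) \<longleftrightarrow> Bnd x {1..n}"
    using sing nen unfolding T_L_def T_M_def Bnd_def by (auto simp: Min_ge_iff)
  show ?thesis unfolding eqv
  proof
    assume coh: "coherent ({{i} | i. i \<in> {1..n}} \<union> {{1..n}}) (conj_rv E H x) (conj_cond H) x"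
    have cF: "\<And>J. J \<subseteq> {{i} | i. i \<in> {1..n}} \<union> {{1..n}} \<Longrightarrow> J \<noteq> {} \<Longrightarrow> cohJ (conj_rv E H x) (conj_cond H) x J"
      using coh unfolding coherent_iff by blast
    show "Bnd x {1..n}"
    proof (rule step[OF finn cn bndH sing])
      show "cohJ (conj_rv E H x) (conj_cond H) x {{1..n}}" by (intro cF) auto
      show "cohJ (conj_rv E H x) (conj_cond H) x {{1..n}, {i}}" if "i \<in> {1..n}" for i
        using that by (intro cF) auto
      show "cohJ (conj_rv E H x) (conj_cond H) x (insert {1..n} ((\<lambda>i. {i}) ` {1..n}))"
        by (intro cF) auto
    qed auto
  next
    assume B: "Bnd x {1..n}"
    show "coherent ({{i} | i. i \<in> {1..n}} \<union> {{1..n}}) (conj_rv E H x) (conj_cond H) x"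
      unfolding coherent_iff
    proof (intro allI impI)
      fix J assume JF: "J \<subseteq> {{i} | i. i \<in> {1..n}} \<union> {{1..n}}" and Jne: "J \<noteq> {}"
      show "cohJ (conj_rv E H x) (conj_cond H) x J"
      proof (cases "{1..n} \<in> J")
        case False
        have "J \<subseteq> {S. S \<noteq> {} \<and> S \<subset> {1..n}}"
        proof
          fix S assume "S \<in> J"
          with JF False obtain i where "i \<in> {1..n}" "S = {i}" by blast
          thus "S \<in> {S. S \<noteq> {} \<and> S \<subset> {1..n}}" using isub by blast
        qed
        thus ?thesis using hyp Jne by blast
      next
        case True
        note pp = pos_part[OF n2 assms(2) JF True sing B]
        show ?thesis unfolding cohJ_def
        proof (intro allI conjI)
          fix s :: "nat set \<Rightarrow> real"
          show "\<exists>w\<in>(\<Union>T\<in>J. conj_cond H T). 0 \<le> (\<Sum>T\<in>J. s T * indicator (conj_cond H T) w * (conj_rv E H x T w - x T))"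
            by (rule pp)
          obtain w where "w\<in>(\<Union>T\<in>J. conj_cond H T)"
            "0 \<le> (\<Sum>T\<in>J. (- s T) * indicator (conj_cond H T) w * (conj_rv E H x T w - x T))"
            using pp[of "\<lambda>T. - s T"] by blast
          moreover have "(\<Sum>T\<in>J. (- s T) * indicator (conj_cond H T) w * (conj_rv E H x T w - x T))
             = - (\<Sum>T\<in>J. s T * indicator (conj_cond H T) w * (conj_rv E H x T w - x T))"
            by (simp add: sum_negf[symmetric])
          ultimately show "\<exists>w\<in>(\<Union>T\<in>J. conj_cond H T). (\<Sum>T\<in>J. s T * indicator (conj_cond H T) w * (conj_rv E H x T w - x T)) \<le> 0"
            by auto
        qed
      qed
    qed
  qed
qed

end
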